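(* Let $0<\beta<1$, $-1<\rho<1$, $\beta_\ast=1-\beta$, $\rho_\ast=\sqrt{1-\rho^2}$, $V>0$ and $a\in\mathbb R$. Define $\beta'=\frac{\beta}{1-\beta_\ast\rho^2}$, $\beta_\ast'=1-\beta'=\frac{\beta_\ast\rho_\ast^2}{1-\beta_\ast\rho^2}$ and $\bar F'=\left|\frac{\beta_\ast'}{\beta_\ast}a\right|^{1/\beta_\ast'}$. Let $F\ge0$ be a random variable with $$\mathrm{Prob}(F\ge y)=P_{\chi^2}\!\left(\frac{a^2}{\beta_\ast^2V};\ \frac{1-\beta_\ast\rho^2}{\beta_\ast\rho_\ast^2},\ \frac{y^{2\beta_\ast}}{\beta_\ast^2V}\right)\quad\text{for all }y>0.$$ Then $Y:=\left(\frac{\beta_\ast'}{\beta_\ast}F^{\beta_\ast}\right)^{1/\beta_\ast'}$ has law $\mathrm{CEV}_{\beta'}(\bar F',V)$, i.e. $\mathrm{Prob}(Y\ge y')=P_{\chi^2}\!\left(\frac{(\bar F')^{2\beta_\ast'}}{\beta_\ast'^2V};\ \frac1{\beta_\ast'},\ \frac{(y')^{2\beta_\ast'}}{\beta_\ast'^2V}\right)$ for all $y'>0$; equivalently $F=(\beta_\ast/\beta_\ast')^{1/\beta_\ast}Y^{\beta_\ast'/\beta_\ast}$. In particular $E\!\left[F^{\beta_\ast/\beta_\ast'}\right]=|a|^{1/\beta_\ast'}$.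
   Context: $P_{\chi^2}(x;\delta,r)$ is the distribution function at $x$ of the noncentral chi-squared law with $\delta$ degrees of freedom and noncentrality $r$. For $0<b<1$, $b_\ast=1-b$, $F_0\ge0$ and $V>0$, $\mathrm{CEV}_b(F_0,V)$ denotes the law at time $1$ of the process $\mathrm{d}F_s=\sqrt V F_s^{b}\,\mathrm{d}B_s$ started at $F_0$ and absorbed at $0$; its complementary distribution function is $\mathrm{Prob}(F_1>y)=P_{\chi^2}\!\left(\frac{F_0^{2b_\ast}}{b_\ast^2V};\frac1{b_\ast},\frac{y^{2b_\ast}}{b_\ast^2V}\right)$ for $y>0$, and its mean is $F_0$. In the SABR application, $a=F_t^{\beta_\ast}+\frac{\beta_\ast\rho}{\nu}(\sigma_{t+h}-\sigma_t)$ and $V=\rho_\ast^2\sigma_t^2hI_t^h$. *)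

theory Defs
  imports "HOL-Probability.Probability"
begin

definition chi2_density :: "real \<Rightarrow> real \<Rightarrow> real" where
  "chi2_density k t =
     (if 0 < t then t powr (k / 2 - 1) * exp (- t / 2) / (2 powr (k / 2) * Gamma (k / 2)) else 0)"

definition chi2_cdf :: "real \<Rightarrow> real \<Rightarrow> real" where
  "chi2_cdf k x = (LINT t:{..x}|lborel. chi2_density k t)"

text \<open>Distribution function at x of the noncentral chi-squared law with delta degrees
  of freedom and noncentrality r (Poisson mixture of central laws).\<close>
definition P_chi2 :: "real \<Rightarrow> real \<Rightarrow> real \<Rightarrow> real" where
  "P_chi2 x \<delta> r = (\<Sum>j. exp (- r / 2) * (r / 2) ^ j / fact j * chi2_cdf (\<delta> + 2 * real j) x)"

end

theory Submission imports Defs begin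

lemma gamma_half:
  assumes s: "0 < s"
  shows "(\<integral>\<^sup>+ r. ennreal (indicator {0..} r * (r powr (s-1) * exp(-r/2))) \<partial>lborel)
         = ennreal (2 powr s * Gamma s)"
proof -
  have G: "(\<integral>\<^sup>+ t. ennreal (indicator {0..} t * (t powr (s-1) / exp t)) \<partial>lborel) = ennreal (Gamma s)"
    by (rule nn_integral_has_integral_lebesgue[OF _ Gamma_integral_real[OF s]]) auto
  have "(\<integral>\<^sup>+ r. ennreal (indicator {0..} r * (r powr (s-1) * exp(-r/2))) \<partial>lborel)
      = ennreal \<bar>2::real\<bar> * (\<integral>\<^sup>+ u. ennreal (indicator {0..} (0 + 2*u) * ((0 + 2*u) powr (s-1) * exp(-(0 + 2*u)/2))) \<partial>lborel)"
    by (rule nn_integral_real_affine) auto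
  also have "\<dots> = 2 * (\<integral>\<^sup>+ u. ennreal (2 powr (s-1)) * ennreal (indicator {0..} u * (u powr (s-1) / exp u)) \<partial>lborel)"
  proof -
    have "ennreal (indicator {0..} (0 + 2*u) * ((0 + 2*u) powr (s-1) * exp(-(0 + 2*u)/2)))
        = ennreal (2 powr (s-1)) * ennreal (indicator {0..} u * (u powr (s-1) / exp u))" for u :: real
    proof (cases "0 \<le> u")
      case True
      then show ?thesis
        by (simp add: ennreal_mult'[symmetric] powr_mult exp_minus field_simps indicator_def)
    next
      case False
      then show ?thesis by (simp add: indicator_def)
    qed
    then show ?thesis by simp
  qed
  also have "\<dots> = 2 * (ennreal (2 powr (s-1)) * ennreal (Gamma s))"
    using G by (subst nn_integral_cmult) simp_all
  also have "\<dots> = ennreal (2 powr s * Gamma s)"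
  proof -
    have "2 * 2 powr (s-1) = (2::real) powr s"
      by (simp add: powr_diff)
    moreover have "Gamma s \<ge> 0" using s by (simp add: Gamma_real_pos less_imp_le)
    ultimately show ?thesis
      by (simp add: ennreal_mult'[symmetric] mult.assoc[symmetric] ennreal_numeral[symmetric] del: ennreal_numeral)
  qed
  finally show ?thesis .
qed

lemma ftc_pow:
  assumes x: "0 \<le> x" and k: "0 < k"
  shows "(\<integral>\<^sup>+ t. ennreal (indicator {0..x} t * (k * t powr (k-1))) \<partial>lborel) = ennreal (x powr k)"
proof -
  have "((\<lambda>t. k * t powr (k-1)) has_integral (x powr k - 0 powr k)) {0..x}"
  proof (rule fundamental_theorem_of_calculus_interior[OF x])
    show "continuous_on {0..x} (\<lambda>t. t powr k)"
      using k by (intro continuous_on_powr') (auto intro: continuous_intros)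
    fix t assume "t \<in> {0<..<x}"
    then have "((\<lambda>z. z powr k) has_real_derivative k * t powr (k - 1)) (at t)"
      by (intro has_real_derivative_powr) auto
    then show "((\<lambda>t. t powr k) has_vector_derivative k * t powr (k - 1)) (at t)"
      by (simp add: has_real_derivative_iff_has_vector_derivative)
  qed
  then have "((\<lambda>t. k * t powr (k-1)) has_integral (x powr k)) {0..x}" by simp
  then show ?thesis
    by (rule nn_integral_has_integral_lebesgue[rotated]) (use k in auto)
qed


lemma chi2_density_eq:
  assumes "0 \<le> t"
  shows "chi2_density d t = t powr (d/2 - 1) * exp (-t/2) / (2 powr (d/2) * Gamma (d/2))"
  using assms by (cases "t = 0") (auto simp: chi2_density_def)

lemma cdf_nn:
  assumes d: "0 < d" and x: "0 \<le> x"
  shows "ennreal (chi2_cdf d x) =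
           (\<integral>\<^sup>+ t. ennreal (indicator {0..x} t * (t powr (d/2-1) * exp(-t/2))) \<partial>lborel)
             * ennreal (1 / (2 powr (d/2) * Gamma (d/2)))"
    and "0 \<le> chi2_cdf d x" "chi2_cdf d x \<le> 1"
proof -
  define m where "m = d/2"
  have m: "0 < m" using d by (simp add: m_def)
  define D where "D = 2 powr m * Gamma m"
  have D: "0 < D" using m by (simp add: D_def Gamma_real_pos)
  define g where "g t = t powr (m-1) * exp(-t/2)" for t :: real
  define h where "h t = indicator {..x} t *\<^sub>R chi2_density d t" for t :: real
  have hmeas[measurable]: "h \<in> borel_measurable borel"
    unfolding h_def chi2_density_def by measurable
  have gmeas[measurable]: "g \<in> borel_measurable borel"
    unfolding g_def by measurable
  have hnn: "0 \<le> h t" for t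
    using d by (auto simp: h_def chi2_density_def indicator_def Gamma_real_pos intro!: divide_nonneg_pos)
  have heq: "ennreal (h t) = ennreal (indicator {0..x} t * g t) * ennreal (1/D)" for t
  proof (cases "0 \<le> t")
    case True
    then show ?thesis
      using D by (auto simp add: h_def chi2_density_eq g_def m_def D_def indicator_def ennreal_mult'[symmetric])
  next
    case False
    then show ?thesis by (auto simp: h_def chi2_density_def indicator_def)
  qed
  have Ix: "(\<integral>\<^sup>+ t. ennreal (indicator {0..x} t * g t) \<partial>lborel) \<le> ennreal D"
  proof -
    have "(\<integral>\<^sup>+ t. ennreal (indicator {0..x} t * g t) \<partial>lborel) \<le>
          (\<integral>\<^sup>+ t. ennreal (indicator {0..} t * g t) \<partial>lborel)"
      by (intro nn_integral_mono) (auto simp: indicator_def g_def)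
    also have "\<dots> = ennreal D" unfolding g_def D_def by (rule gamma_half[OF m])
    finally show ?thesis .
  qed
  have hN: "(\<integral>\<^sup>+ t. ennreal (h t) \<partial>lborel) =
      (\<integral>\<^sup>+ t. ennreal (indicator {0..x} t * g t) \<partial>lborel) * ennreal (1/D)"
    by (simp only: heq) (rule nn_integral_multc, measurable)
  then have hle: "(\<integral>\<^sup>+ t. ennreal (h t) \<partial>lborel) \<le> ennreal D * ennreal (1/D)"
    using Ix by (auto intro: mult_right_mono)
  also have "\<dots> = 1" using D by (simp add: ennreal_mult'[symmetric])
  finally have hle1: "(\<integral>\<^sup>+ t. ennreal (h t) \<partial>lborel) \<le> 1" .
  then obtain r where r: "(\<integral>\<^sup>+ t. ennreal (h t) \<partial>lborel) = ennreal r"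
    by (metis ennreal_cases ennreal_one_less_top top.not_eq_extremum order.strict_trans1)
  have hint: "integrable lborel h"
    by (rule integrableI_nn_integral_finite[where x=r]) (auto simp: hnn r)
  have cdf: "chi2_cdf d x = integral\<^sup>L lborel h"
    by (simp add: chi2_cdf_def set_lebesgue_integral_def h_def[abs_def])
  have E: "ennreal (chi2_cdf d x) = (\<integral>\<^sup>+ t. ennreal (h t) \<partial>lborel)"
    unfolding cdf by (rule nn_integral_eq_integral[OF hint, symmetric]) (simp add: hnn)
  show "ennreal (chi2_cdf d x) =
           (\<integral>\<^sup>+ t. ennreal (indicator {0..x} t * (t powr (d/2-1) * exp(-t/2))) \<partial>lborel)
             * ennreal (1 / (2 powr (d/2) * Gamma (d/2)))"
    using E hN by (simp add: g_def m_def D_def)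
  show "0 \<le> chi2_cdf d x" unfolding cdf by (rule integral_nonneg_AE) (simp add: hnn)
  then show "chi2_cdf d x \<le> 1" using E hle1 by (metis ennreal_le_1)
qed


lemma layer_cake:
  assumes P: "prob_space M" and Rm[measurable]: "R \<in> borel_measurable M"
    and Rnn: "\<forall>\<omega>\<in>space M. 0 \<le> R \<omega>" and k: "0 < k"
  shows "(\<integral>\<^sup>+\<omega>. ennreal (R \<omega> powr k) \<partial>M) =
    (\<integral>\<^sup>+ r. ennreal (indicator {0..} r * (k * r powr (k-1)) * measure M {\<omega>\<in>space M. r \<le> R \<omega>}) \<partial>lborel)"
proof -
  interpret prob_space M by (rule P)
  interpret PS: pair_sigma_finite M lborel
    by (simp add: pair_sigma_finite.intro sigma_finite_measure_axioms lborel.sigma_finite_measure_axioms)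
  define f where "f \<omega> r = ennreal (if 0 \<le> r \<and> r \<le> R \<omega> then k * r powr (k-1) else 0)" for \<omega> r
  have fm: "case_prod f \<in> borel_measurable (M \<Otimes>\<^sub>M lborel)"
    unfolding f_def by measurable
  have "(\<integral>\<^sup>+\<omega>. ennreal (R \<omega> powr k) \<partial>M) = (\<integral>\<^sup>+\<omega>. (\<integral>\<^sup>+ r. f \<omega> r \<partial>lborel) \<partial>M)"
  proof (rule nn_integral_cong)
    fix \<omega> assume "\<omega> \<in> space M"
    then have "0 \<le> R \<omega>" using Rnn by auto
    have "(\<integral>\<^sup>+ r. f \<omega> r \<partial>lborel) = (\<integral>\<^sup>+ t. ennreal (indicator {0..R \<omega>} t * (k * t powr (k-1))) \<partial>lborel)"
      by (intro nn_integral_cong) (auto simp: f_def indicator_def)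
    also have "\<dots> = ennreal (R \<omega> powr k)" by (rule ftc_pow[OF \<open>0 \<le> R \<omega>\<close> k])
    finally show "ennreal (R \<omega> powr k) = (\<integral>\<^sup>+ r. f \<omega> r \<partial>lborel)" by simp
  qed
  also have "\<dots> = (\<integral>\<^sup>+ r. (\<integral>\<^sup>+\<omega>. f \<omega> r \<partial>M) \<partial>lborel)"
    by (rule PS.Fubini'[OF fm, symmetric])
  also have "\<dots> = (\<integral>\<^sup>+ r. ennreal (indicator {0..} r * (k * r powr (k-1)) * measure M {\<omega>\<in>space M. r \<le> R \<omega>}) \<partial>lborel)"
  proof (rule nn_integral_cong)
    fix r :: real
    have S: "{\<omega>\<in>space M. r \<le> R \<omega>} \<in> sets M" by measurable
    have c: "0 \<le> indicator {0..} r * (k * r powr (k-1))" using k by (auto simp: indicator_def)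
    have "(\<integral>\<^sup>+\<omega>. f \<omega> r \<partial>M) = (\<integral>\<^sup>+\<omega>. ennreal (indicator {0..} r * (k * r powr (k-1))) * indicator {\<omega>\<in>space M. r \<le> R \<omega>} \<omega> \<partial>M)"
      by (intro nn_integral_cong) (auto simp: f_def indicator_def)
    also have "\<dots> = ennreal (indicator {0..} r * (k * r powr (k-1))) * emeasure M {\<omega>\<in>space M. r \<le> R \<omega>}"
      by (rule nn_integral_cmult_indicator[OF S])
    also have "\<dots> = ennreal (indicator {0..} r * (k * r powr (k-1)) * measure M {\<omega>\<in>space M. r \<le> R \<omega>})"
      using c by (simp add: emeasure_eq_measure ennreal_mult)
    finally show "(\<integral>\<^sup>+\<omega>. f \<omega> r \<partial>M) = ennreal (indicator {0..} r * (k * r powr (k-1)) * measure M {\<omega>\<in>space M. r \<le> R \<omega>})" .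
  qed
  finally show ?thesis .
qed


lemma powr_times_pow:
  fixes r :: real assumes "0 \<le> r"
  shows "r powr a * r ^ j = r powr (a + real j)"
proof (cases "r = 0")
  case True then show ?thesis by (cases j) auto
next
  case False then show ?thesis using assms by (simp add: powr_add powr_realpow)
qed

lemma exp_sums_real: "(\<lambda>j. x ^ j / fact j) sums exp (x::real)"
  using exp_converges[of x] by (simp add: divide_inverse mult.commute scaleR_conv_of_real)

lemma exp_series_ennreal:
  fixes x :: real assumes "0 \<le> x"
  shows "(\<Sum>j. ennreal (x ^ j / fact j)) = ennreal (exp x)"
proof -
  have "(\<lambda>j. x ^ j / fact j) sums exp x"
    using exp_converges[of x] by (simp add: divide_inverse mult.commute scaleR_conv_of_real)
  then show ?thesis
    using assms by (subst suminf_ennreal2) (auto simp: sums_iff)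
qed

lemma core:
  assumes k: "0 < k" and x0: "0 \<le> x0"
  shows "(\<integral>\<^sup>+ r. ennreal (indicator {0..} r * (k * r powr (k-1)) * P_chi2 x0 (2*k) r) \<partial>lborel)
         = ennreal (x0 powr k)"
proof -
  define c where "c j = chi2_cdf (2*k + 2 * real j) x0" for j
  define w where "w r = indicator {0..} r * (k * r powr (k-1))" for r :: real
  define p where "p j r = exp (- r / 2) * (r / 2) ^ j / fact j" for j and r :: real
  define G where "G j = 2 powr (k + real j) * Gamma (k + real j)" for j
  have Gpos: "0 < G j" for j using k by (simp add: G_def Gamma_real_pos)
  have cb: "0 \<le> c j" "c j \<le> 1" for j
    using cdf_nn(2,3)[of "2*k + 2 * real j" x0] k x0 by (auto simp: c_def)
  have cN: "ennreal (c j) = (\<integral>\<^sup>+ t. ennreal (indicator {0..x0} t * (t powr (k + real j - 1) * exp(-t/2))) \<partial>lborel)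
             * ennreal (1 / G j)" for j
    using cdf_nn(1)[of "2*k + 2 * real j" x0] k x0 by (simp add: c_def G_def add_divide_distrib)
  have wnn: "0 \<le> w r" for r using k by (auto simp: w_def indicator_def)
  have pnn: "0 \<le> r \<Longrightarrow> 0 \<le> p j r" for j r by (simp add: p_def)
  have Pdef: "P_chi2 x0 (2*k) r = (\<Sum>j. p j r * c j)" for r
    by (simp add: P_chi2_def p_def c_def)
  have A: "ennreal (w r * P_chi2 x0 (2*k) r) = (\<Sum>j. ennreal (w r * p j r * c j))" for r
  proof (cases "0 \<le> r")
    case False
    then show ?thesis by (simp add: w_def)
  next
    case True
    have se: "summable (\<lambda>j. (r/2) ^ j / fact j)"
      using exp_sums_real[of "r/2"] by (rule sums_summable)
    have s1: "summable (\<lambda>j. p j r * c j)"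
    proof (rule summable_comparison_test'[where g = "\<lambda>j. exp (- r / 2) * ((r/2) ^ j / fact j)"])
      show "summable (\<lambda>j. exp (- r / 2) * ((r/2) ^ j / fact j))" using se by (rule summable_mult)
      fix j :: nat
      have "norm (p j r * c j) = p j r * c j" using pnn[OF True] cb by simp
      also have "\<dots> \<le> p j r * 1" using pnn[OF True] cb by (intro mult_left_mono) auto
      finally show "norm (p j r * c j) \<le> exp (- r / 2) * ((r/2) ^ j / fact j)" by (simp add: p_def)
    qed
    have e1: "w r * P_chi2 x0 (2*k) r = (\<Sum>j. w r * (p j r * c j))"
      unfolding Pdef by (rule suminf_mult[OF s1, symmetric])
    have e2: "(\<Sum>j. ennreal (w r * (p j r * c j))) = ennreal (\<Sum>j. w r * (p j r * c j))"
      by (rule suminf_ennreal2[OF _ summable_mult[OF s1]])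
         (use wnn pnn[OF True] cb in \<open>simp\<close>)
    show ?thesis by (simp only: e1 e2[symmetric] mult.assoc)
  qed
  have C: "(\<integral>\<^sup>+ r. ennreal (w r * p j r * c j) \<partial>lborel) = ennreal (k / (2^j * fact j) * G j) * ennreal (c j)" for j
  proof -
    have "(\<integral>\<^sup>+ r. ennreal (w r * p j r * c j) \<partial>lborel) =
        (\<integral>\<^sup>+ r. ennreal (k * c j / (2^j * fact j)) * ennreal (indicator {0..} r * (r powr (k + real j - 1) * exp(-r/2))) \<partial>lborel)"
    proof (rule nn_integral_cong)
      fix r :: real
      show "ennreal (w r * p j r * c j) = ennreal (k * c j / (2^j * fact j)) * ennreal (indicator {0..} r * (r powr (k + real j - 1) * exp(-r/2)))"
      proof (cases "0 \<le> r")
        case False then show ?thesis by (simp add: w_def)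
      next
        case True
        have e: "r powr (k - 1) * r ^ j = r powr (k + real j - 1)"
          using powr_times_pow[OF True, of "k-1" j] by (simp add: algebra_simps)
        have "w r * p j r * c j = (k * c j / (2^j * fact j)) * (r powr (k - 1) * r ^ j * exp(-r/2))"
          using True by (simp add: w_def p_def power_divide field_simps)
        also have "\<dots> = (k * c j / (2^j * fact j)) * (indicator {0..} r * (r powr (k + real j - 1) * exp(-r/2)))"
          using True e by simp
        finally show ?thesis using True k cb by (simp add: ennreal_mult'[symmetric])
      qed
    qed
    also have "\<dots> = ennreal (k * c j / (2^j * fact j)) * ennreal (G j)"
      using gamma_half[of "k + real j"] k by (subst nn_integral_cmult) (auto simp: G_def)
    also have "\<dots> = ennreal (k / (2^j * fact j) * G j) * ennreal (c j)"
      using k cb Gpos by (simp add: ennreal_mult'[symmetric] ennreal_mult[symmetric] field_simps less_imp_le)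
    finally show ?thesis .
  qed
  define q where "q j t = indicator {0..x0} t * (k * t powr (k - 1)) * (exp(-t/2) * ((t/2) ^ j / fact j))" for j and t :: real
  have D: "ennreal (k / (2^j * fact j) * G j) * ennreal (c j) = (\<integral>\<^sup>+ t. ennreal (q j t) \<partial>lborel)" for j
  proof -
    have "ennreal (k / (2^j * fact j) * G j) * ennreal (c j) =
       ennreal (k / (2^j * fact j) * G j) * ennreal (1 / G j) * (\<integral>\<^sup>+ t. ennreal (indicator {0..x0} t * (t powr (k + real j - 1) * exp(-t/2))) \<partial>lborel)"
      by (simp add: cN mult_ac)
    also have "\<dots> = ennreal (k / (2^j * fact j)) * (\<integral>\<^sup>+ t. ennreal (indicator {0..x0} t * (t powr (k + real j - 1) * exp(-t/2))) \<partial>lborel)"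
      using Gpos[of j] k by (simp add: ennreal_mult'[symmetric] ennreal_mult[symmetric] field_simps less_imp_le)
    also have "\<dots> = (\<integral>\<^sup>+ t. ennreal (k / (2^j * fact j)) * ennreal (indicator {0..x0} t * (t powr (k + real j - 1) * exp(-t/2))) \<partial>lborel)"
      by (subst nn_integral_cmult) auto
    also have "\<dots> = (\<integral>\<^sup>+ t. ennreal (q j t) \<partial>lborel)"
    proof (rule nn_integral_cong)
      fix t :: real
      show "ennreal (k / (2^j * fact j)) * ennreal (indicator {0..x0} t * (t powr (k + real j - 1) * exp(-t/2))) = ennreal (q j t)"
      proof (cases "0 \<le> t")
        case False then show ?thesis by (simp add: q_def indicator_def)
      next
        case True
        have e: "t powr (k - 1) * t ^ j = t powr (k + real j - 1)"
          using powr_times_pow[OF True, of "k-1" j] by (simp add: algebra_simps)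
        have "q j t = k / (2^j * fact j) * (indicator {0..x0} t * (t powr (k - 1) * t ^ j * exp(-t/2)))"
          by (simp add: q_def power_divide field_simps)
        then have "q j t = k / (2^j * fact j) * (indicator {0..x0} t * (t powr (k + real j - 1) * exp(-t/2)))"
          using e by simp
        then show ?thesis using True k by (simp add: ennreal_mult'[symmetric])
      qed
    qed
    finally show ?thesis .
  qed
  have E: "(\<Sum>j. ennreal (q j t)) = ennreal (indicator {0..x0} t * (k * t powr (k - 1)))" for t :: real
  proof (cases "0 \<le> t")
    case False then show ?thesis by (simp add: q_def indicator_def)
  next
    case True
    have v: "0 \<le> indicator {0..x0} t * (k * t powr (k - 1)) * exp(-t/2)" using k by (simp add: indicator_def)
    have "(\<Sum>j. ennreal (q j t)) = (\<Sum>j. ennreal (indicator {0..x0} t * (k * t powr (k - 1)) * exp(-t/2)) * ennreal ((t/2) ^ j / fact j))"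
      using v True by (simp add: q_def ennreal_mult'[symmetric] mult_ac)
    also have "\<dots> = ennreal (indicator {0..x0} t * (k * t powr (k - 1)) * exp(-t/2)) * (\<Sum>j. ennreal ((t/2) ^ j / fact j))"
      by (rule ennreal_suminf_cmult)
    also have "\<dots> = ennreal (indicator {0..x0} t * (k * t powr (k - 1)) * exp(-t/2)) * ennreal (exp (t/2))"
      by (subst exp_series_ennreal) (use True in auto)
    also have "\<dots> = ennreal (indicator {0..x0} t * (k * t powr (k - 1)))"
      using v by (simp add: ennreal_mult'[symmetric] exp_minus field_simps)
    finally show ?thesis .
  qed
  have "(\<integral>\<^sup>+ r. ennreal (indicator {0..} r * (k * r powr (k-1)) * P_chi2 x0 (2*k) r) \<partial>lborel)
      = (\<integral>\<^sup>+ r. (\<Sum>j. ennreal (w r * p j r * c j)) \<partial>lborel)"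
    using A by (simp add: w_def)
  also have "\<dots> = (\<Sum>j. (\<integral>\<^sup>+ r. ennreal (w r * p j r * c j) \<partial>lborel))"
    by (rule nn_integral_suminf) (simp add: w_def p_def)
  also have "\<dots> = (\<Sum>j. (\<integral>\<^sup>+ t. ennreal (q j t) \<partial>lborel))"
    by (simp only: C D)
  also have "\<dots> = (\<integral>\<^sup>+ t. (\<Sum>j. ennreal (q j t)) \<partial>lborel)"
    by (rule nn_integral_suminf[symmetric]) (simp add: q_def)
  also have "\<dots> = (\<integral>\<^sup>+ t. ennreal (indicator {0..x0} t * (k * t powr (k - 1))) \<partial>lborel)"
    by (simp add: E)
  also have "\<dots> = ennreal (x0 powr k)" by (rule ftc_pow[OF x0 k])
  finally show ?thesis .
qed


lemma powr_le_iff_aux: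
  fixes u v p :: real
  assumes "0 \<le> u" "0 \<le> v" "0 < p"
  shows "(u \<le> v powr p) = (u powr (1/p) \<le> v)"
proof
  assume "u \<le> v powr p"
  then have "u powr (1/p) \<le> (v powr p) powr (1/p)"
    using assms by (intro powr_mono2) auto
  also have "\<dots> = v" using assms by (simp add: powr_powr powr_one)
  finally show "u powr (1/p) \<le> v" .
next
  assume "u powr (1/p) \<le> v"
  then have "(u powr (1/p)) powr p \<le> v powr p"
    using assms by (intro powr_mono2) auto
  also have "(u powr (1/p)) powr p = u" using assms by (simp add: powr_powr powr_one)
  finally show "u \<le> v powr p" .
qed

theorem mainTheorem7:
  fixes M :: "'s measure" and F :: "'s \<Rightarrow> real"
    and \<beta> \<rho> V a :: real
  assumes "prob_space M"
    and "F \<in> borel_measurable M"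
    and "\<forall>\<omega>\<in>space M. 0 \<le> F \<omega>"
    and "0 < \<beta>" "\<beta> < 1" "-1 < \<rho>" "\<rho> < 1" "0 < V"
    and "\<forall>y>0. measure M {\<omega>\<in>space M. F \<omega> \<ge> y} =
           P_chi2 (a\<^sup>2 / ((1 - \<beta>)\<^sup>2 * V))
                  ((1 - (1 - \<beta>) * \<rho>\<^sup>2) / ((1 - \<beta>) * (sqrt (1 - \<rho>\<^sup>2))\<^sup>2))
                  (y powr (2 * (1 - \<beta>)) / ((1 - \<beta>)\<^sup>2 * V))"
  shows "let b = 1 - \<beta>; \<rho>' = sqrt (1 - \<rho>\<^sup>2);
             \<beta>' = \<beta> / (1 - b * \<rho>\<^sup>2); b' = 1 - \<beta>';
             Fbar = \<bar>b' / b * a\<bar> powr (1 / b');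
             Y = (\<lambda>\<omega>. (b' / b * F \<omega> powr b) powr (1 / b'))
         in b' = b * \<rho>'\<^sup>2 / (1 - b * \<rho>\<^sup>2)
          \<and> (\<forall>y'>0. measure M {\<omega>\<in>space M. Y \<omega> \<ge> y'} =
                 P_chi2 (Fbar powr (2 * b') / (b'\<^sup>2 * V)) (1 / b') (y' powr (2 * b') / (b'\<^sup>2 * V)))
          \<and> (\<forall>\<omega>\<in>space M. F \<omega> = (b / b') powr (1 / b) * Y \<omega> powr (b' / b))
          \<and> integrable M (\<lambda>\<omega>. F \<omega> powr (b / b'))
          \<and> (\<integral>\<omega>. F \<omega> powr (b / b') \<partial>M) = \<bar>a\<bar> powr (1 / b')"
proof -
  note Fm[measurable] = assms(2)
  have Fnn: "\<And>\<omega>. \<omega> \<in> space M \<Longrightarrow> 0 \<le> F \<omega>" using assms(3) by auto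
  define b where "b = 1 - \<beta>"
  define b' where "b' = 1 - \<beta> / (1 - b * \<rho>\<^sup>2)"
  have b: "0 < b" "b < 1" using assms(4,5) by (auto simp: b_def)
  have r2: "\<rho>\<^sup>2 < 1" using assms(6,7)
    by (metis abs_less_iff abs_square_less_1 less_minus_iff minus_less_iff)
  have rp2: "(sqrt (1 - \<rho>\<^sup>2))\<^sup>2 = 1 - \<rho>\<^sup>2" using r2 by simp
  have br: "b * \<rho>\<^sup>2 < 1"
  proof -
    have "b * \<rho>\<^sup>2 \<le> 1 * \<rho>\<^sup>2" using b by (intro mult_right_mono) auto
    then show ?thesis using r2 by simp
  qed
  have den: "0 < 1 - b * \<rho>\<^sup>2" using br by simp
  have b'eq: "b' = b * (sqrt (1 - \<rho>\<^sup>2))\<^sup>2 / (1 - b * \<rho>\<^sup>2)"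
    using den unfolding rp2 b'_def by (simp add: field_simps b_def)
  have b'pos: "0 < b'" unfolding b'eq rp2 using b r2 den by (intro divide_pos_pos mult_pos_pos) auto
  have Deq: "(1 - b * \<rho>\<^sup>2) / (b * (sqrt (1 - \<rho>\<^sup>2))\<^sup>2) = 1 / b'"
    unfolding b'eq using den b r2 rp2 by (simp add: field_simps)
  define C where "C = b\<^sup>2 * V"
  have C: "0 < C" using b assms(8) by (simp add: C_def)
  define x0 where "x0 = a\<^sup>2 / C"
  have x0: "0 \<le> x0" using C by (simp add: x0_def)
  have hyp: "\<And>y. y > 0 \<Longrightarrow> measure M {\<omega>\<in>space M. F \<omega> \<ge> y} = P_chi2 x0 (1/b') (y powr (2*b) / C)"
    using assms(9) Deq by (simp add: b_def C_def x0_def)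
  define Y where "Y \<omega> = (b' / b * F \<omega> powr b) powr (1 / b')" for \<omega>
  have P2: "measure M {\<omega>\<in>space M. Y \<omega> \<ge> y'} =
           P_chi2 ((\<bar>b' / b * a\<bar> powr (1 / b')) powr (2 * b') / (b'\<^sup>2 * V)) (1 / b') (y' powr (2 * b') / (b'\<^sup>2 * V))"
    if y': "y' > 0" for y'
  proof -
    define Z where "Z = b / b' * y' powr b'"
    have Z: "0 < Z" using b b'pos y' by (simp add: Z_def)
    define y where "y = Z powr (1/b)"
    have y: "0 < y" using Z by (simp add: y_def)
    have S: "{\<omega>\<in>space M. Y \<omega> \<ge> y'} = {\<omega>\<in>space M. F \<omega> \<ge> y}"
    proof (intro Collect_cong conj_cong refl)
      fix \<omega> assume \<omega>: "\<omega> \<in> space M"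
      have X: "0 \<le> b' / b * F \<omega> powr b" using b b'pos by simp
      have "(Y \<omega> \<ge> y') = (y' powr (1 / (1/b')) \<le> b' / b * F \<omega> powr b)"
        unfolding Y_def using y' X b'pos by (intro powr_le_iff_aux) auto
      also have "\<dots> = (Z \<le> F \<omega> powr b)"
        using b b'pos by (simp add: Z_def field_simps)
      also have "\<dots> = (y \<le> F \<omega>)"
        unfolding y_def using Z Fnn[OF \<omega>] b by (intro powr_le_iff_aux) auto
      finally show "(Y \<omega> \<ge> y') = (F \<omega> \<ge> y)" .
    qed
    have e1: "y powr (2*b) / C = y' powr (2 * b') / (b'\<^sup>2 * V)"
    proof -
      have "y powr (2*b) = Z\<^sup>2" using Z b by (simp add: y_def powr_powr)
      also have "\<dots> = (b/b')\<^sup>2 * (y' powr b')\<^sup>2" by (simp add: Z_def power_mult_distrib power_divide)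
      also have "(y' powr b')\<^sup>2 = y' powr (2*b')"
        using y' by (simp add: powr_powr[symmetric] mult.commute[of 2])
      finally show ?thesis using b b'pos C assms(8) by (simp add: C_def field_simps)
    qed
    have e2: "(\<bar>b' / b * a\<bar> powr (1 / b')) powr (2 * b') / (b'\<^sup>2 * V) = x0"
    proof -
      have "(\<bar>b' / b * a\<bar> powr (1 / b')) powr (2 * b') = \<bar>b' / b * a\<bar>\<^sup>2"
        using b'pos by (simp add: powr_powr)
      also have "\<dots> = (b'/b)\<^sup>2 * a\<^sup>2" by (metis power2_abs power_mult_distrib)
      finally show ?thesis using b b'pos assms(8) by (simp add: x0_def C_def field_simps)
    qed
    show ?thesis unfolding S e2 using hyp[OF y] e1 by simp
  qed
  have P3: "F \<omega> = (b / b') powr (1 / b) * Y \<omega> powr (b' / b)" if \<omega>: "\<omega> \<in> space M" for \<omega>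
  proof -
    have "Y \<omega> powr (b' / b) = (b' / b * F \<omega> powr b) powr (1/b)"
      using b b'pos by (simp add: Y_def powr_powr)
    also have "\<dots> = (b'/b) powr (1/b) * F \<omega>"
    proof -
      have "(F \<omega> powr b) powr (1/b) = F \<omega>" using b Fnn[OF \<omega>] by (simp add: powr_powr powr_one)
      then show ?thesis by (simp only: powr_mult)
    qed
    finally have "(b / b') powr (1 / b) * Y \<omega> powr (b' / b) = ((b / b') powr (1 / b) * (b'/b) powr (1/b)) * F \<omega>"
      by simp
    also have "(b / b') powr (1 / b) * (b'/b) powr (1/b) = 1"
      using b b'pos by (simp add: powr_mult[symmetric])
    finally show ?thesis by simp
  qed
  define k where "k = 1 / (2 * b')"
  have k: "0 < k" using b'pos by (simp add: k_def)
  define R where "R \<omega> = F \<omega> powr (2*b) / C" for \<omega>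
  have Rm[measurable]: "R \<in> borel_measurable M" unfolding R_def by measurable
  have Rnn: "\<forall>\<omega>\<in>space M. 0 \<le> R \<omega>" using C by (simp add: R_def)
  have LC: "(\<integral>\<^sup>+\<omega>. ennreal (R \<omega> powr k) \<partial>M) = ennreal (x0 powr k)"
  proof -
    have "(\<integral>\<^sup>+\<omega>. ennreal (R \<omega> powr k) \<partial>M) =
      (\<integral>\<^sup>+ r. ennreal (indicator {0..} r * (k * r powr (k-1)) * measure M {\<omega>\<in>space M. r \<le> R \<omega>}) \<partial>lborel)"
      by (rule layer_cake[OF assms(1) Rm Rnn k])
    also have "\<dots> = (\<integral>\<^sup>+ r. ennreal (indicator {0..} r * (k * r powr (k-1)) * P_chi2 x0 (2*k) r) \<partial>lborel)"
    proof (rule nn_integral_cong)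
      fix r :: real
      show "ennreal (indicator {0..} r * (k * r powr (k-1)) * measure M {\<omega>\<in>space M. r \<le> R \<omega>}) =
            ennreal (indicator {0..} r * (k * r powr (k-1)) * P_chi2 x0 (2*k) r)"
      proof (cases "0 < r")
        case False
        have Z0: "indicator {0..} r * (k * r powr (k-1)) = (0::real)"
          using False by (cases "r = 0") (auto simp: indicator_def)
        show ?thesis unfolding Z0 by simp
      next
        case True
        define y where "y = (C * r) powr (1 / (2*b))"
        have y: "0 < y" using True C by (simp add: y_def)
        have S: "{\<omega>\<in>space M. r \<le> R \<omega>} = {\<omega>\<in>space M. F \<omega> \<ge> y}"
        proof (intro Collect_cong conj_cong refl)
          fix \<omega> assume \<omega>: "\<omega> \<in> space M"
          have "(r \<le> R \<omega>) = (C * r \<le> F \<omega> powr (2*b))"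
            using C by (simp add: R_def field_simps)
          also have "\<dots> = (y \<le> F \<omega>)"
            unfolding y_def using True C b Fnn[OF \<omega>] by (intro powr_le_iff_aux) auto
          finally show "(r \<le> R \<omega>) = (F \<omega> \<ge> y)" .
        qed
        have ey: "y powr (2*b) / C = r"
          using b C True by (simp add: y_def powr_powr powr_one)
        have "measure M {\<omega>\<in>space M. r \<le> R \<omega>} = P_chi2 x0 (2*k) r"
          unfolding S hyp[OF y] ey using b'pos by (simp add: k_def)
        then show ?thesis by simp
      qed
    qed
    also have "\<dots> = ennreal (x0 powr k)" by (rule core[OF k x0])
    finally show ?thesis .
  qed
  have Feq: "F \<omega> powr (b / b') = C powr k * R \<omega> powr k" if \<omega>: "\<omega> \<in> space M" for \<omega>
    using C b'pos by (simp add: R_def powr_divide powr_powr k_def)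
  have aeq: "C powr k * x0 powr k = \<bar>a\<bar> powr (1 / b')"
  proof -
    have "C powr k * x0 powr k = (a\<^sup>2) powr k"
      using C by (simp add: x0_def powr_mult[symmetric])
    also have "(a\<^sup>2) powr k = (\<bar>a\<bar> powr 2) powr k" by simp
    also have "\<dots> = \<bar>a\<bar> powr (1 / b')" unfolding powr_powr k_def by simp
    finally show ?thesis .
  qed
  have NN: "(\<integral>\<^sup>+\<omega>. ennreal (F \<omega> powr (b / b')) \<partial>M) = ennreal (\<bar>a\<bar> powr (1 / b'))"
  proof -
    have "(\<integral>\<^sup>+\<omega>. ennreal (F \<omega> powr (b / b')) \<partial>M) = (\<integral>\<^sup>+\<omega>. ennreal (C powr k) * ennreal (R \<omega> powr k) \<partial>M)"
      by (intro nn_integral_cong) (simp add: Feq ennreal_mult)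
    also have "\<dots> = ennreal (C powr k) * ennreal (x0 powr k)"
      by (subst nn_integral_cmult) (auto simp: LC)
    also have "\<dots> = ennreal (\<bar>a\<bar> powr (1 / b'))"
      by (simp add: ennreal_mult[symmetric] aeq)
    finally show ?thesis .
  qed
  have int: "integrable M (\<lambda>\<omega>. F \<omega> powr (b / b'))"
    by (rule integrableI_nn_integral_finite[OF _ _ NN]) auto
  have I: "(\<integral>\<omega>. F \<omega> powr (b / b') \<partial>M) = \<bar>a\<bar> powr (1 / b')"
  proof -
    have "ennreal (\<integral>\<omega>. F \<omega> powr (b / b') \<partial>M) = ennreal (\<bar>a\<bar> powr (1 / b'))"
      using nn_integral_eq_integral[OF int] NN by simp
    moreover have "0 \<le> (\<integral>\<omega>. F \<omega> powr (b / b') \<partial>M)" by (rule integral_nonneg_AE) simp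
    ultimately show ?thesis by simp
  qed
  show ?thesis
    unfolding Let_def b_def[symmetric] b'_def[symmetric]
    using b'eq P2 P3 int I by (simp add: Y_def)
qed


end
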